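(* Let $G$ be a topological group with identity $e$ and $\kappa$ a cardinal. If $A$ is a precompact subset of $G$ and $\mathcal{N}_e^G$ has calibre $(\kappa^+,\omega)$, then $w(A)\le\kappa$.
   Context: $\mathcal{N}_e^G$ is the family of open neighborhoods of $e$ ordered by reverse inclusion. A subset $A$ of $G$ is precompact if it is totally bounded with respect to the (left) group uniformity, i.e. for every neighborhood $U$ of $e$ there is finite $F\subseteq A$ with $A\subseteq FU$. A directed set $P$ has calibre $(\mu,\lambda)$ if every subset of $P$ of size $\mu$ contains a subset of size $\lambda$ with an upper bound in $P$. $w(A)$ is the weight (least size of a base) of $A$. *)

theory Defs
  imports "HOL-Analysis.Analysis"
begin

text \<open>Topological groups are modelled by the library class topological_group_add
  (a group written additively, not necessarily commutative, whose addition is jointly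
  continuous and whose inversion is continuous); the identity e is 0.\<close>

definition nbhds_e :: "'a::topological_group_add set set" where
  "nbhds_e = {U. open U \<and> 0 \<in> U}"

text \<open>Precompact (totally bounded w.r.t. the left uniformity): for every neighbourhood U
  of e there is a finite F \<subseteq> A with A \<subseteq> F U.\<close>
definition precompact :: "'a::topological_group_add set \<Rightarrow> bool" where
  "precompact A \<longleftrightarrow> (\<forall>U. open U \<and> 0 \<in> U \<longrightarrow>
     (\<exists>F. finite F \<and> F \<subseteq> A \<and> A \<subseteq> (\<Union>f\<in>F. (\<lambda>u. f + u) ` U)))"

definition calibre :: "'p set \<Rightarrow> ('p \<Rightarrow> 'p \<Rightarrow> bool) \<Rightarrow> 'm rel \<Rightarrow> 'l rel \<Rightarrow> bool" where
  "calibre P le mu lam \<longleftrightarrow> (\<forall>S. S \<subseteq> P \<and> (card_of S, mu) \<in> ordIso \<longrightarrow>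
     (\<exists>T. T \<subseteq> S \<and> (card_of T, lam) \<in> ordIso \<and> (\<exists>u\<in>P. \<forall>t\<in>T. le t u)))"

definition is_base :: "'a topology \<Rightarrow> 'a set set \<Rightarrow> bool" where
  "is_base X \<B> \<longleftrightarrow> (\<forall>B\<in>\<B>. openin X B) \<and>
     (\<forall>U. openin X U \<longrightarrow> (\<exists>\<C>. \<C> \<subseteq> \<B> \<and> \<Union>\<C> = U))"

definition weight_le :: "'a topology \<Rightarrow> 'k rel \<Rightarrow> bool" where
  "weight_le X kappa \<longleftrightarrow> (\<exists>\<B>. is_base X \<B> \<and> (card_of \<B>, kappa) \<in> ordLeq)"

end

theory Submission
  imports Defs
begin

unbundle cardinal_syntax


lemma finite_le_inf:
  assumes "Card_order r" "infinite (Field r)" "finite X"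
  shows "|X| \<le>o r"
proof -
  have "Well_order r" using assms(1) card_order_on_well_order_on by blast
  then have "|X| <o r" using finite_ordLess_infinite[OF card_of_Well_order] assms Field_card_of by metis
  then show ?thesis by (rule ordLess_imp_ordLeq)
qed

lemma fin_subsets_le:
  assumes r: "Card_order r" and inf: "infinite (Field r)" and X: "|X| \<le>o r"
  shows "|{G. G \<subseteq> X \<and> finite G}| \<le>o r"
proof -
  define P where "P n = {G. G \<subseteq> X \<and> finite G \<and> card G \<le> n}" for n
  have Pn: "|P n| \<le>o r" for n
  proof (induction n)
    case 0
    have "P 0 = {{}}" by (auto simp: P_def)
    then show ?case using finite_le_inf[OF r inf, of "{{}}"] by simp
  next
    case (Suc n)
    have sub: "P (Suc n) \<subseteq> P n \<union> (\<lambda>(x,G). insert x G) ` (X \<times> P n)"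
    proof
      fix G assume G: "G \<in> P (Suc n)"
      show "G \<in> P n \<union> (\<lambda>(x,G). insert x G) ` (X \<times> P n)"
      proof (cases "G = {}")
        case True then show ?thesis by (auto simp: P_def)
      next
        case False
        then obtain x where x: "x \<in> G" by auto
        have "G - {x} \<in> P n" using G x by (auto simp: P_def)
        moreover have "G = insert x (G - {x})" using x by auto
        ultimately show ?thesis using G x unfolding P_def by (auto intro!: image_eqI[where x="(x, G - {x})"])
      qed
    qed
    have "|X \<times> P n| \<le>o r" using card_of_Times_ordLeq_infinite_Field[OF inf X Suc r] .
    then have "|(\<lambda>(x,G). insert x G) ` (X \<times> P n)| \<le>o r"
      using ordLeq_transitive[OF card_of_image] by blast
    then have "|P n \<union> (\<lambda>(x,G). insert x G) ` (X \<times> P n)| \<le>o r"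
      using card_of_Un_ordLeq_infinite_Field[OF inf Suc _ r] by blast
    then show ?case using ordLeq_transitive[OF card_of_mono1[OF sub]] by blast
  qed
  have eq: "{G. G \<subseteq> X \<and> finite G} = (\<Union>n. P n)" by (auto simp: P_def)
  have "|UNIV::nat set| \<le>o |Field r|" using inf infinite_iff_card_of_nat by blast
  then have "|UNIV::nat set| \<le>o r" using card_of_Field_ordIso[OF r] ordLeq_ordIso_trans by blast
  then show ?thesis unfolding eq using card_of_UNION_ordLeq_infinite_Field[OF inf r] Pn by blast
qed


lemma half_nbhd:
  fixes W :: "'a::topological_monoid_add set"
  assumes "open W" "0 \<in> W"
  shows "\<exists>U. open U \<and> 0 \<in> U \<and> (\<forall>a\<in>U. \<forall>b\<in>U. a + b \<in> W)"
proof -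
  have "((\<lambda>p. fst p + snd p) \<longlongrightarrow> (0::'a) + 0) (nhds 0 \<times>\<^sub>F nhds 0)" by (rule tendsto_add_Pair)
  then have "eventually (\<lambda>p. fst p + snd p \<in> W) (nhds (0::'a) \<times>\<^sub>F nhds 0)"
    using assms topological_tendstoD by fastforce
  then obtain Pf Pg where ev: "eventually Pf (nhds 0)" "eventually Pg (nhds 0)"
    and H: "\<And>x y. Pf x \<Longrightarrow> Pg y \<Longrightarrow> x + y \<in> W"
    unfolding eventually_prod_filter by fastforce
  obtain S1 where S1: "open S1" "0 \<in> S1" "\<forall>x\<in>S1. Pf x" using ev(1) unfolding eventually_nhds by blast
  obtain S2 where S2: "open S2" "0 \<in> S2" "\<forall>x\<in>S2. Pg x" using ev(2) unfolding eventually_nhds by blast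
  show ?thesis using S1 S2 H by (intro exI[of _ "S1 \<inter> S2"]) auto
qed

lemma open_transl:
  fixes S :: "'a::topological_group_add set"
  assumes "open S" shows "open ((\<lambda>x. a + x) ` S)"
proof -
  have "(\<lambda>x. a + x) ` S = (\<lambda>x. -a + x) -` S"
  proof
    show "(\<lambda>x. a + x) ` S \<subseteq> (\<lambda>x. -a + x) -` S" by (auto simp: add.assoc[symmetric])
    show "(\<lambda>x. -a + x) -` S \<subseteq> (\<lambda>x. a + x) ` S"
    proof
      fix x assume "x \<in> (\<lambda>x. -a + x) -` S"
      then have "-a + x \<in> S" by simp
      moreover have "x = a + (-a + x)" by (simp add: add.assoc[symmetric])
      ultimately show "x \<in> (\<lambda>x. a + x) ` S" by blast
    qed
  qed
  moreover have "continuous_on UNIV (\<lambda>x::'a. -a + x)" by (intro continuous_intros)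
  ultimately show ?thesis using open_vimage assms by metis
qed

lemma open_neg:
  fixes S :: "'a::topological_group_add set"
  assumes "open S" shows "open (uminus ` S)"
proof -
  have "uminus ` S = uminus -` S"
  proof
    show "uminus ` S \<subseteq> uminus -` S" by auto
    show "uminus -` S \<subseteq> uminus ` S"
    proof
      fix x assume "x \<in> uminus -` S"
      then have "-x \<in> S" by simp
      then show "x \<in> uminus ` S" using image_eqI[of x uminus "-x"] by simp
    qed
  qed
  moreover have "continuous_on UNIV (\<lambda>x::'a. - x)" by (intro continuous_intros)
  ultimately show ?thesis using open_vimage assms by metis
qed


lemma five_nbhd:
  fixes W :: "'a::topological_group_add set"
  assumes "open W" "0 \<in> W"
  shows "\<exists>U. open U \<and> 0 \<in> U \<and> (\<forall>a\<in>U. \<forall>b\<in>U. \<forall>c\<in>U. \<forall>d\<in>U. \<forall>e\<in>U. a + b + c + d + e \<in> W)"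
proof -
  obtain W1 where W1: "open W1" "0 \<in> W1" "\<forall>a\<in>W1. \<forall>b\<in>W1. a + b \<in> W" using half_nbhd[OF assms] by blast
  obtain W2 where W2: "open W2" "0 \<in> W2" "\<forall>a\<in>W2. \<forall>b\<in>W2. a + b \<in> W1" using half_nbhd[OF W1(1) W1(2)] by blast
  obtain W3 where W3: "open W3" "0 \<in> W3" "\<forall>a\<in>W3. \<forall>b\<in>W3. a + b \<in> W2" using half_nbhd[OF W2(1) W2(2)] by blast
  have s32: "W3 \<subseteq> W2"
  proof
    fix x assume "x \<in> W3" then have "x + 0 \<in> W2" using W3 by blast
    then show "x \<in> W2" by simp
  qed
  have s21: "W2 \<subseteq> W1"
  proof
    fix x assume "x \<in> W2" then have "x + 0 \<in> W1" using W2 by blast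
    then show "x \<in> W1" by simp
  qed
  show ?thesis
  proof (rule exI[of _ W3], intro conjI W3(1) W3(2) ballI)
    fix a b c d e assume h: "a \<in> W3" "b \<in> W3" "c \<in> W3" "d \<in> W3" "e \<in> W3"
    have ab: "a + b \<in> W2" using W3(3) h by blast
    have cd: "c + d \<in> W2" using W3(3) h by blast
    have "a + b + (c + d) \<in> W1" using W2(3) ab cd by blast
    then have 1: "a + b + c + d \<in> W1" by (simp add: add.assoc)
    have 2: "e \<in> W1" using s32 s21 h by blast
    show "a + b + c + d + e \<in> W" using W1(3) 1 2 by blast
  qed
qed

lemma good_nbhd:
  fixes W :: "'a::topological_group_add set"
  assumes "open W" "a \<in> W"
  shows "\<exists>U. open U \<and> 0 \<in> U \<and> (\<forall>u\<in>U. \<forall>v\<in>U. a + (-u + v) \<in> W)"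
proof -
  have o: "open ((\<lambda>x. -a + x) ` W)" using open_transl[OF assms(1)] by blast
  have "(0::'a) = -a + a" by simp
  then have "0 \<in> (\<lambda>x. -a + x) ` W" using assms(2) by (rule image_eqI)
  then obtain U where U: "open U" "0 \<in> U" "\<forall>x\<in>U. \<forall>y\<in>U. x + y \<in> (\<lambda>x. -a + x) ` W"
    using half_nbhd[OF o] by blast
  define U' where "U' = U \<inter> uminus ` U"
  have "open U'" unfolding U'_def using open_Int[OF U(1) open_neg[OF U(1)]] .
  moreover have "0 \<in> U'" using U unfolding U'_def by force
  moreover have "a + (-u + v) \<in> W" if "u \<in> U'" "v \<in> U'" for u v
  proof -
    have "-u \<in> U" using that unfolding U'_def by auto
    then have "-u + v \<in> (\<lambda>x. -a + x) ` W" using U that unfolding U'_def by blast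
    then obtain x where x: "x \<in> W" "-u + v = -a + x" by blast
    have "a + (-a + x) = x" by (simp add: add.assoc[symmetric])
    then show ?thesis using x by simp
  qed
  ultimately show ?thesis by blast
qed


definition leA :: "'a::group_add set \<Rightarrow> 'a set \<Rightarrow> 'a set \<Rightarrow> bool" where
  "leA A V W \<longleftrightarrow> (\<forall>x\<in>A. \<forall>y\<in>A. -x + y \<in> V \<longrightarrow> -x + y \<in> W)"

definition suff :: "'a::topological_group_add set \<Rightarrow> 'a set set \<Rightarrow> bool" where
  "suff A VV \<longleftrightarrow> (\<forall>W\<in>nbhds_e. \<exists>G. finite G \<and> G \<subseteq> VV \<and> leA A (\<Inter>G) W)"

lemma grp1: "(a::'a::group_add) = f + u \<Longrightarrow> -f + a = u"
  by (simp add: add.assoc[symmetric])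

lemma grp2: "a + (- (-f + a) + (-f + (y::'a::group_add))) = y"
  by (simp add: add.assoc[symmetric] minus_add)

lemma weight_from_suff:
  fixes A :: "'a::topological_group_add set" and kappa :: "'k rel"
  assumes r: "Card_order kappa" and inf: "infinite (Field kappa)" and pc: "precompact A"
    and V: "VV \<subseteq> nbhds_e" and card: "|VV| \<le>o kappa" and s: "suff A VV"
  shows "weight_le (subtopology euclidean A) kappa"
proof -
  define Fv where "Fv V = (SOME F. finite F \<and> F \<subseteq> A \<and> A \<subseteq> (\<Union>f\<in>F. (\<lambda>u. f + u) ` V))" for V
  have Fv: "finite (Fv V) \<and> Fv V \<subseteq> A \<and> A \<subseteq> (\<Union>f\<in>Fv V. (\<lambda>u. f + u) ` V)" if "open V" "0 \<in> V" for V
  proof -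
    have "\<exists>F. finite F \<and> F \<subseteq> A \<and> A \<subseteq> (\<Union>f\<in>F. (\<lambda>u. f + u) ` V)"
      using pc that unfolding precompact_def by blast
    then show ?thesis unfolding Fv_def by (rule someI_ex)
  qed
  define GG where "GG = {G. G \<subseteq> VV \<and> finite G}"
  define BB where "BB = (\<Union>G\<in>GG. (\<lambda>f. A \<inter> (\<lambda>u. f + u) ` (\<Inter>G)) ` Fv (\<Inter>G))"
  have opG: "open (\<Inter>G) \<and> 0 \<in> \<Inter>G" if "G \<in> GG" for G
  proof -
    have "finite G" "\<forall>T\<in>G. open T \<and> 0 \<in> T" using that V unfolding GG_def nbhds_e_def by auto
    then show ?thesis using open_Inter[of G] by blast
  qed
  have cGG: "|GG| \<le>o kappa" unfolding GG_def using fin_subsets_le[OF r inf card] .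
  have cBB: "|BB| \<le>o kappa" unfolding BB_def
  proof (rule card_of_UNION_ordLeq_infinite_Field[OF inf r cGG], rule ballI)
    fix G assume "G \<in> GG"
    then have "finite (Fv (\<Inter>G))" using Fv opG[OF \<open>G \<in> GG\<close>] by blast
    then show "|(\<lambda>f. A \<inter> (\<lambda>u. f + u) ` (\<Inter>G)) ` Fv (\<Inter>G)| \<le>o kappa"
      using finite_le_inf[OF r inf] by blast
  qed
  have base: "is_base (subtopology euclidean A) BB"
    unfolding is_base_def
  proof (intro conjI allI impI ballI)
    fix B assume "B \<in> BB"
    then obtain G f where Bd: "B = A \<inter> (\<lambda>u. f + u) ` (\<Inter>G)" "G \<in> GG" unfolding BB_def by blast
    then have o: "open ((\<lambda>u. f + u) ` (\<Inter>G))" using opG[OF Bd(2)] open_transl[of "\<Inter>G" f] by blast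
    show "openin (subtopology euclidean A) B"
      using openin_open_Int[OF o, of A] Bd(1) by simp
  next
    fix U assume "openin (subtopology euclidean A) U"
    then obtain T where T: "open T" "U = A \<inter> T" using openin_open by blast
    define C where "C = {B\<in>BB. B \<subseteq> U}"
    have "U \<subseteq> \<Union>C"
    proof
      fix a assume a: "a \<in> U"
      then have aA: "a \<in> A" and aT: "a \<in> T" using T by auto
      obtain W0 where W0: "open W0" "0 \<in> W0" "\<forall>u\<in>W0. \<forall>v\<in>W0. a + (-u + v) \<in> T"
        using good_nbhd[OF T(1) aT] by blast
      have "W0 \<in> nbhds_e" unfolding nbhds_e_def using W0 by blast
      then obtain G where G: "finite G" "G \<subseteq> VV" "leA A (\<Inter>G) W0"
        using s unfolding suff_def by blast
      have GG: "G \<in> GG" using G unfolding GG_def by blast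
      have FvG: "finite (Fv (\<Inter>G)) \<and> Fv (\<Inter>G) \<subseteq> A \<and> A \<subseteq> (\<Union>f\<in>Fv (\<Inter>G). (\<lambda>u. f + u) ` (\<Inter>G))"
        using Fv opG[OF GG] by blast
      then obtain f u0 where f: "f \<in> Fv (\<Inter>G)" "u0 \<in> \<Inter>G" "a = f + u0" using aA by blast
      have fA: "f \<in> A" using f FvG by blast
      have fa: "-f + a \<in> \<Inter>G" by (subst grp1[OF f(3)]) (rule f(2))
      then have faW: "-f + a \<in> W0" using G(3) fA aA unfolding leA_def by blast
      define B where "B = A \<inter> (\<lambda>u. f + u) ` (\<Inter>G)"
      have "B \<in> BB" unfolding BB_def B_def using GG f by blast
      moreover have "B \<subseteq> U"
      proof
        fix y assume "y \<in> B"
        then obtain w where y: "y \<in> A" "w \<in> \<Inter>G" "y = f + w" unfolding B_def by blast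
        have "-f + y \<in> \<Inter>G" by (subst grp1[OF y(3)]) (rule y(2))
        then have "-f + y \<in> W0" using G(3) fA y unfolding leA_def by blast
        then have "a + (- (-f + a) + (-f + y)) \<in> T" using W0 faW by blast
        then have "y \<in> T" unfolding grp2 .
        then show "y \<in> U" using T y by blast
      qed
      moreover have "a \<in> B" unfolding B_def using aA f by blast
      ultimately show "a \<in> \<Union>C" unfolding C_def by blast
    qed
    moreover have "\<Union>C \<subseteq> U" unfolding C_def by blast
    ultimately have eqC: "\<Union>C = U" by (rule subset_antisym[rotated])
    have CB: "C \<subseteq> BB" unfolding C_def by blast
    show "\<exists>C\<subseteq>BB. \<Union>C = U" using CB eqC by blast
  qed
  show ?thesis unfolding weight_le_def by (rule exI[of _ BB]) (use base cBB in blast)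
qed


lemma grp3: "-v1 + v2 + (-(f + v2) + (g + w2)) + -w2 + w1 = -(f + v1) + (g + (w1::'a::group_add))"
  by (simp only: minus_add add.assoc add_minus_cancel)

lemma five_rule:
  assumes "\<forall>a\<in>U. \<forall>b\<in>U. \<forall>c\<in>U. \<forall>d\<in>U. \<forall>e\<in>U. P a b c d e"
    and "a \<in> U" "b \<in> U" "c \<in> U" "d \<in> U" "e \<in> U"
  shows "P a b c d e"
  using bspec[OF bspec[OF bspec[OF bspec[OF bspec[OF assms(1) assms(2)] assms(3)] assms(4)] assms(5)] assms(6)] .

lemma no_suff_false:
  fixes A :: "'a::topological_group_add set" and kappa :: "'k rel"
  assumes r: "Card_order kappa" and inf: "infinite (Field kappa)" and pc: "precompact A"
    and cal: "calibre (nbhds_e :: 'a set set) (\<lambda>U V. V \<subseteq> U) (cardSuc kappa) natLeq"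
    and ns: "\<forall>VV. VV \<subseteq> nbhds_e \<and> |VV| \<le>o kappa \<longrightarrow> \<not> suff A VV"
  shows False
proof -
  define Good where "Good VV p \<longleftrightarrow> fst p \<in> nbhds_e \<and> snd p \<in> nbhds_e \<and>
     (\<forall>a\<in>fst p. \<forall>b\<in>fst p. \<forall>c\<in>fst p. \<forall>d\<in>fst p. \<forall>e\<in>fst p. a + b + c + d + e \<in> snd p) \<and>
     (\<forall>G. finite G \<and> G \<subseteq> VV \<inter> nbhds_e \<longrightarrow> \<not> leA A (\<Inter>G) (snd p))" for VV :: "'a set set" and p
  have exGood: "\<exists>p. Good VV p" if "|VV| \<le>o kappa" for VV
  proof -
    have "|VV \<inter> nbhds_e| \<le>o kappa"
      using ordLeq_transitive[OF card_of_mono1[of "VV \<inter> nbhds_e" VV] that] by blast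
    then have "\<not> suff A (VV \<inter> nbhds_e)" using ns by blast
    then obtain W where W: "W \<in> nbhds_e" "\<forall>G. finite G \<and> G \<subseteq> VV \<inter> nbhds_e \<longrightarrow> \<not> leA A (\<Inter>G) W"
      unfolding suff_def by blast
    have oW: "open W" "0 \<in> W" using W(1) unfolding nbhds_e_def by auto
    obtain U where U: "open U" "0 \<in> U" "\<forall>a\<in>U. \<forall>b\<in>U. \<forall>c\<in>U. \<forall>d\<in>U. \<forall>e\<in>U. a + b + c + d + e \<in> W"
      using five_nbhd[OF oW] by blast
    have "U \<in> nbhds_e" unfolding nbhds_e_def using U(1,2) by blast
    then have "Good VV (U, W)" unfolding Good_def fst_conv snd_conv using U(3) W by (intro conjI)
    then show ?thesis by (rule exI)
  qed
  define Phi where "Phi VV = (SOME p. Good VV p)" for VV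
  define R where "R = cardSuc kappa"
  have cR: "Card_order R" unfolding R_def using cardSuc_Card_order[OF r] .
  have WO: "Well_order R" using cR card_order_on_well_order_on by blast
  have wf: "wf (R - Id)" using WO unfolding well_order_on_def by blast
  have tot: "total_on (Field R) R" using WO unfolding order_on_defs by blast
  define h where "h = wfrec (R - Id) (\<lambda>f i. Phi ((\<lambda>j. fst (f j)) ` underS R i))"
  have hrec: "h i = Phi ((\<lambda>j. fst (h j)) ` underS R i)" for i
  proof -
    have "h i = Phi ((\<lambda>j. fst (cut h (R - Id) i j)) ` underS R i)"
      unfolding h_def by (subst wfrec[OF wf]) simp
    also have "(\<lambda>j. fst (cut h (R - Id) i j)) ` underS R i = (\<lambda>j. fst (h j)) ` underS R i"
      by (rule image_cong) (auto simp: cut_def underS_def)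
    finally show ?thesis .
  qed
  define U where "U j = fst (h j)" for j
  define W where "W j = snd (h j)" for j
  have cu: "|underS R i| \<le>o kappa" if "i \<in> Field R" for i
  proof -
    have "|underS R i| <o R" using card_of_underS[OF cR that] .
    then show ?thesis unfolding R_def using cardSuc_ordLeq_ordLess[OF r card_of_Card_order] by blast
  qed
  have hgood: "Good (U ` underS R i) (h i)" if "i \<in> Field R" for i
  proof -
    have "|U ` underS R i| \<le>o kappa" using ordLeq_transitive[OF card_of_image cu[OF that]] .
    then have "\<exists>p. Good (U ` underS R i) p" by (rule exGood)
    then have "Good (U ` underS R i) (Phi (U ` underS R i))" unfolding Phi_def by (rule someI_ex)
    then show ?thesis using hrec[of i] unfolding U_def by simp
  qed
  have Un: "U i \<in> nbhds_e" if "i \<in> Field R" for i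
    using hgood[OF that] unfolding Good_def U_def by blast
  have five: "\<forall>a\<in>U i. \<forall>b\<in>U i. \<forall>c\<in>U i. \<forall>d\<in>U i. \<forall>e\<in>U i. a + b + c + d + e \<in> W i" if "i \<in> Field R" for i
    using hgood[OF that] unfolding Good_def U_def W_def by blast
  have defeat: "\<not> leA A (\<Inter>G) (W i)" if "i \<in> Field R" "finite G" "G \<subseteq> U ` underS R i \<inter> nbhds_e" for i G
    using hgood[OF that(1)] that(2,3) unfolding Good_def W_def by blast
  have uF: "underS R i \<subseteq> Field R" for i unfolding underS_def Field_def by blast
  have neq: "U j \<noteq> U i" if "i \<in> Field R" "j \<in> underS R i" for i j
  proof
    assume eq: "U j = U i"
    have jF: "j \<in> Field R" using that(2) uF by blast
    have sub: "{U j} \<subseteq> U ` underS R i \<inter> nbhds_e" using Un[OF jF] that(2) by blast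
    have "\<not> leA A (\<Inter>{U j}) (W i)" using defeat[OF that(1) _ sub] by simp
    moreover have "leA A (\<Inter>{U j}) (W i)"
    proof -
      have z: "0 \<in> U i" using Un[OF that(1)] unfolding nbhds_e_def by blast
      have "x \<in> W i" if "x \<in> U i" for x
      proof -
        have "x + 0 + 0 + 0 + 0 \<in> W i" using five_rule[OF five[OF \<open>i \<in> Field R\<close>] that z z z z] .
        then show ?thesis by simp
      qed
      then show ?thesis unfolding leA_def using eq by auto
    qed
    ultimately show False by blast
  qed
  have inj: "inj_on U (Field R)"
  proof (rule inj_onI)
    fix i j assume ij: "i \<in> Field R" "j \<in> Field R" "U i = U j"
    show "i = j"
    proof (rule ccontr)
      assume "i \<noteq> j"
      then have "(i, j) \<in> R \<or> (j, i) \<in> R" using tot ij(1,2) unfolding total_on_def by blast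
      then have "i \<in> underS R j \<or> j \<in> underS R i" using \<open>i \<noteq> j\<close> unfolding underS_def by blast
      then show False
      proof
        assume "i \<in> underS R j" then show False using neq[OF ij(2)] ij(3) by blast
      next
        assume "j \<in> underS R i" then show False using neq[OF ij(1)] ij(3) by blast
      qed
    qed
  qed
  define S where "S = U ` Field R"
  have "bij_betw U (Field R) S" unfolding S_def using inj by (simp add: bij_betw_def)
  then have "|Field R| =o |S|" using card_of_ordIso[of "Field R" S] by blast
  then have SR: "|S| =o cardSuc kappa"
    using ordIso_transitive[OF ordIso_symmetric card_of_Field_ordIso[OF cR]] unfolding R_def by blast
  have SN: "S \<subseteq> nbhds_e" unfolding S_def using Un by auto
  have "\<exists>T. T \<subseteq> S \<and> |T| =o natLeq \<and> (\<exists>u\<in>nbhds_e. \<forall>t\<in>T. u \<subseteq> t)"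
    using cal unfolding calibre_def using SN SR by blast
  then obtain T u where T: "T \<subseteq> S" "|T| =o natLeq" "u \<in> nbhds_e" "\<forall>t\<in>T. u \<subseteq> t"
    by blast
  have Tinf: "infinite T"
  proof
    assume "finite T"
    then have lt: "|T| <o natLeq" using finite_iff_ordLess_natLeq[of T] by blast
    show False using not_ordLess_ordIso[OF lt] T(2) by blast
  qed
  define V where "V = u \<inter> uminus ` u"
  have u: "open u" "0 \<in> u" using T(3) unfolding nbhds_e_def by auto
  have Vo: "open V" unfolding V_def by (rule open_Int[OF u(1) open_neg[OF u(1)]])
  have "(0::'a) \<in> uminus ` u" using image_eqI[of 0 uminus 0 u] u(2) by simp
  then have V0: "0 \<in> V" unfolding V_def using u(2) by blast
  have "\<exists>F. finite F \<and> F \<subseteq> A \<and> A \<subseteq> (\<Union>f\<in>F. (\<lambda>x. f + x) ` V)"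
    using pc Vo V0 unfolding precompact_def by blast
  then obtain F where F: "finite F" "F \<subseteq> A" "A \<subseteq> (\<Union>f\<in>F. (\<lambda>x. f + x) ` V)"
    by blast
  obtain T0 where T0: "finite T0" "card T0 = Suc (card (F \<times> F))" "T0 \<subseteq> T"
    using infinite_arbitrarily_large[OF Tinf] by blast
  define idx where "idx t = inv_into (Field R) U t" for t
  have idx1: "idx t \<in> Field R" if "t \<in> S" for t
    using that unfolding idx_def S_def by (rule inv_into_into)
  have idx2: "U (idx t) = t" if "t \<in> S" for t
    using that unfolding idx_def S_def by (rule f_inv_into_f)
  have T0S: "t \<in> S" if "t \<in> T0" for t using that T0(3) T(1) by blast
  define P where "P t = {s\<in>T0. idx s \<in> underS R (idx t)}" for t
  have wit: "\<exists>p. fst p \<in> A \<and> snd p \<in> A \<and> - fst p + snd p \<in> \<Inter>(P t) \<and> - fst p + snd p \<notin> W (idx t)"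
    if "t \<in> T0" for t
  proof -
    have tS: "t \<in> S" using T0S[OF that] .
    have fin: "finite (P t)" using T0(1) unfolding P_def by simp
    have sub: "P t \<subseteq> U ` underS R (idx t) \<inter> nbhds_e"
    proof
      fix s assume sP: "s \<in> P t"
      then have sS: "s \<in> S" and si: "idx s \<in> underS R (idx t)" using T0S unfolding P_def by auto
      have e: "s = U (idx s)" using idx2[OF sS] by simp
      have "s \<in> U ` underS R (idx t)" using image_eqI[of s U "idx s", OF e si] .
      moreover have "s \<in> nbhds_e" using SN sS by blast
      ultimately show "s \<in> U ` underS R (idx t) \<inter> nbhds_e" by blast
    qed
    have "\<not> leA A (\<Inter>(P t)) (W (idx t))" using defeat[OF idx1[OF tS] fin sub] .
    then obtain x y where "x \<in> A" "y \<in> A" "-x + y \<in> \<Inter>(P t)" "-x + y \<notin> W (idx t)"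
      unfolding leA_def by blast
    then show ?thesis by (intro exI[of _ "(x, y)"]) simp
  qed
  define XY where "XY t = (SOME p. fst p \<in> A \<and> snd p \<in> A \<and> - fst p + snd p \<in> \<Inter>(P t) \<and> - fst p + snd p \<notin> W (idx t))" for t
  have XY: "\<forall>t\<in>T0. fst (XY t) \<in> A \<and> snd (XY t) \<in> A \<and> - fst (XY t) + snd (XY t) \<in> \<Inter>(P t)
      \<and> - fst (XY t) + snd (XY t) \<notin> W (idx t)"
  proof
    fix t assume "t \<in> T0"
    show "fst (XY t) \<in> A \<and> snd (XY t) \<in> A \<and> - fst (XY t) + snd (XY t) \<in> \<Inter>(P t)
      \<and> - fst (XY t) + snd (XY t) \<notin> W (idx t)"
      unfolding XY_def by (rule someI_ex[OF wit[OF \<open>t \<in> T0\<close>]])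
  qed
  have col: "\<exists>q. fst q \<in> F \<and> snd q \<in> F \<and> (\<exists>v\<in>V. fst (XY t) = fst q + v) \<and> (\<exists>w\<in>V. snd (XY t) = snd q + w)"
    if "t \<in> T0" for t
  proof -
    have "fst (XY t) \<in> A" "snd (XY t) \<in> A" using XY that by auto
    then have "fst (XY t) \<in> (\<Union>f\<in>F. (\<lambda>x. f + x) ` V)" "snd (XY t) \<in> (\<Union>f\<in>F. (\<lambda>x. f + x) ` V)"
      using F(3) by (blast, blast)
    then obtain f v g w where "f \<in> F" "v \<in> V" "fst (XY t) = f + v" "g \<in> F" "w \<in> V" "snd (XY t) = g + w"
      by blast
    then show ?thesis by (intro exI[of _ "(f, g)"]) auto
  qed
  define c where "c t = (SOME q. fst q \<in> F \<and> snd q \<in> F \<and> (\<exists>v\<in>V. fst (XY t) = fst q + v) \<and> (\<exists>w\<in>V. snd (XY t) = snd q + w))" for t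
  have c: "\<forall>t\<in>T0. fst (c t) \<in> F \<and> snd (c t) \<in> F \<and> (\<exists>v\<in>V. fst (XY t) = fst (c t) + v)
      \<and> (\<exists>w\<in>V. snd (XY t) = snd (c t) + w)"
  proof
    fix t assume "t \<in> T0"
    show "fst (c t) \<in> F \<and> snd (c t) \<in> F \<and> (\<exists>v\<in>V. fst (XY t) = fst (c t) + v)
      \<and> (\<exists>w\<in>V. snd (XY t) = snd (c t) + w)"
      unfolding c_def by (rule someI_ex[OF col[OF \<open>t \<in> T0\<close>]])
  qed
  have m: "- x \<in> u" if "x \<in> V" for x using that unfolding V_def by auto
  have p: "x \<in> u" if "x \<in> V" for x using that unfolding V_def by auto
  have key: False if st: "s \<in> T0" "t \<in> T0" "c s = c t" "idx s \<in> underS R (idx t)" for s t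
  proof -
    have sS: "s \<in> S" using T0S[OF st(1)] .
    have sP: "s \<in> P t" unfolding P_def using st(1,4) by blast
    obtain v1 where v1: "v1 \<in> V" "fst (XY s) = fst (c s) + v1" using c st(1) by blast
    obtain v2 where v2: "v2 \<in> V" "fst (XY t) = fst (c t) + v2" using c st(2) by blast
    obtain w1 where w1: "w1 \<in> V" "snd (XY s) = snd (c s) + w1" using c st(1) by blast
    obtain w2 where w2: "w2 \<in> V" "snd (XY t) = snd (c t) + w2" using c st(2) by blast
    have sT: "s \<in> T" using st(1) T0(3) by blast
    have us: "u \<subseteq> U (idx s)" using T(4) sT idx2[OF sS] by simp
    have "- fst (XY t) + snd (XY t) \<in> \<Inter>(P t)" using XY st(2) by blast
    then have "- fst (XY t) + snd (XY t) \<in> s" using sP by blast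
    then have mid: "- fst (XY t) + snd (XY t) \<in> U (idx s)" using idx2[OF sS] by simp
    have a1: "-v1 \<in> U (idx s)" using us m[OF v1(1)] by blast
    have a2: "v2 \<in> U (idx s)" using us p[OF v2(1)] by blast
    have a4: "-w2 \<in> U (idx s)" using us m[OF w2(1)] by blast
    have a5: "w1 \<in> U (idx s)" using us p[OF w1(1)] by blast
    have in5: "-v1 + v2 + (- fst (XY t) + snd (XY t)) + -w2 + w1 \<in> W (idx s)"
      using five_rule[OF five[OF idx1[OF sS]] a1 a2 mid a4 a5] .
    have eq: "-v1 + v2 + (- fst (XY t) + snd (XY t)) + -w2 + w1 = - fst (XY s) + snd (XY s)"
      unfolding v1(2) v2(2) w1(2) w2(2) st(3) by (rule grp3)
    have "- fst (XY s) + snd (XY s) \<in> W (idx s)" using in5 unfolding eq .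
    then show False using XY st(1) by blast
  qed
  have "\<not> inj_on c T0"
  proof
    assume inj: "inj_on c T0"
    have sub: "c ` T0 \<subseteq> F \<times> F"
    proof
      fix q assume "q \<in> c ` T0"
      then obtain t where "t \<in> T0" "q = c t" by blast
      then have "fst q \<in> F" "snd q \<in> F" using c by auto
      then show "q \<in> F \<times> F" by (simp add: mem_Times_iff)
    qed
    have "card T0 \<le> card (F \<times> F)"
      using card_inj_on_le[OF inj sub finite_cartesian_product[OF F(1) F(1)]] .
    then show False using T0(2) by simp
  qed
  then obtain s t where st: "s \<in> T0" "t \<in> T0" "s \<noteq> t" "c s = c t" unfolding inj_on_def by blast
  have sS: "s \<in> S" and tS: "t \<in> S" using T0S st(1,2) by auto
  have ne: "idx s \<noteq> idx t"
  proof
    assume "idx s = idx t"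
    then have "U (idx s) = U (idx t)" by simp
    then show False using idx2[OF sS] idx2[OF tS] st(3) by simp
  qed
  then have "(idx s, idx t) \<in> R \<or> (idx t, idx s) \<in> R"
    using tot idx1[OF sS] idx1[OF tS] unfolding total_on_def by blast
  then have "idx s \<in> underS R (idx t) \<or> idx t \<in> underS R (idx s)"
    using ne unfolding underS_def by blast
  then show False
  proof
    assume "idx s \<in> underS R (idx t)" then show False using key[OF st(1) st(2) st(4)] by blast
  next
    assume "idx t \<in> underS R (idx s)" then show False using key[OF st(2) st(1) st(4)[symmetric]] by blast
  qed
qed

theorem mainTheorem10:
  fixes A :: "'a::topological_group_add set"
    and kappa :: "'k rel"
  assumes "Card_order kappa" and "infinite (Field kappa)"
    and "precompact A"
    and "calibre (nbhds_e :: 'a set set) (\<lambda>U V. V \<subseteq> U) (cardSuc kappa) natLeq"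
  shows "weight_le (subtopology euclidean A) kappa"
proof (cases "\<exists>VV. VV \<subseteq> nbhds_e \<and> |VV| \<le>o kappa \<and> suff A VV")
  case True
  then obtain VV where "VV \<subseteq> nbhds_e" "|VV| \<le>o kappa" "suff A VV" by blast
  then show ?thesis by (rule weight_from_suff[OF assms(1,2,3)])
next
  case False
  then have "\<forall>VV. VV \<subseteq> nbhds_e \<and> |VV| \<le>o kappa \<longrightarrow> \<not> suff A VV" by blast
  then have False by (rule no_suff_false[OF assms])
  then show ?thesis ..
qed

end
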